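(* Let $F$ be an imaginary quadratic field other than $\mathbb{Q}(\sqrt{-1})$ and $\mathbb{Q}(\sqrt{-3})$, $\Gamma\subset\mathrm{SL}_2(F)$ an arithmetic subgroup, $P$ a parabolic subgroup of $\mathrm{Res}_{F/\mathbb{Q}}(\mathrm{SL}_{2/F})$ with unipotent radical $U_P$, and $R$ a ring in which $2$ is invertible. Put $\Gamma_P=\Gamma\cap P(\mathbb{Q})$ and $\Gamma_{U_P}=\Gamma\cap U_P(\mathbb{Q})$. Then $H^1(\Gamma_P,R)\cong H^1(\Gamma_{U_P},R)$.
   Context: Group cohomology with trivial coefficients $R$, so $H^1(\cdot,R)=\mathrm{Hom}(\cdot,R)$. *)

theory Defs
  imports "HOL-Analysis.Analysis" "HOL-Computational_Algebra.Polynomial"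
    "HOL-Computational_Algebra.Squarefree"
begin

definition imag_quad_field :: "nat \<Rightarrow> complex set" where
  "imag_quad_field d = {of_rat a + of_rat b * (\<i> * of_real (sqrt (real d))) | a b. True}"

definition alg_int :: "complex \<Rightarrow> bool" where
  "alg_int x \<longleftrightarrow> (\<exists>p :: int poly. lead_coeff p = 1 \<and> poly (map_poly of_int p) x = 0)"

definition ring_of_integers :: "complex set \<Rightarrow> complex set" where
  "ring_of_integers F = {x \<in> F. alg_int x}"

definition SL2 :: "complex set \<Rightarrow> (complex^2^2) set" where
  "SL2 S = {A. (\<forall>i j. A $ i $ j \<in> S) \<and> det A = 1}"

definition is_subgroup :: "(complex^2^2) set \<Rightarrow> (complex^2^2) set \<Rightarrow> bool" where
  "is_subgroup H G \<longleftrightarrow> H \<subseteq> G \<and> mat 1 \<in> H \<and> (\<forall>x\<in>H. \<forall>y\<in>H. x ** y \<in> H)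
     \<and> (\<forall>x\<in>H. matrix_inv x \<in> H)"

definition finite_index :: "(complex^2^2) set \<Rightarrow> (complex^2^2) set \<Rightarrow> bool" where
  "finite_index H G \<longleftrightarrow> finite {(\<lambda>h. g ** h) ` H | g. g \<in> G}"

definition commensurable :: "(complex^2^2) set \<Rightarrow> (complex^2^2) set \<Rightarrow> bool" where
  "commensurable A B \<longleftrightarrow> finite_index (A \<inter> B) A \<and> finite_index (A \<inter> B) B"

text \<open>Arithmetic subgroup of SL_2(F) = Res_{F/Q} SL_2 (Q): a subgroup commensurable with SL_2(O_F).\<close>
definition arithmetic_subgroup :: "complex set \<Rightarrow> (complex^2^2) set \<Rightarrow> bool" where
  "arithmetic_subgroup F \<Gamma> \<longleftrightarrow> is_subgroup \<Gamma> (SL2 F) \<and> commensurable \<Gamma> (SL2 (ring_of_integers F))"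

definition vec_in :: "complex set \<Rightarrow> complex^2 \<Rightarrow> bool" where
  "vec_in F v \<longleftrightarrow> (\<forall>i. v $ i \<in> F)"

text \<open>Rational points of the proper parabolic Q-subgroup of Res_{F/Q} SL_2 given by the
  stabiliser of the F-line F v (v a nonzero vector in F^2), and of its unipotent radical.\<close>
definition parabolic_pts :: "complex set \<Rightarrow> complex^2 \<Rightarrow> (complex^2^2) set" where
  "parabolic_pts F v = {g \<in> SL2 F. \<exists>c\<in>F. g *v v = c *s v}"

definition unipotent_radical_pts :: "complex set \<Rightarrow> complex^2 \<Rightarrow> (complex^2^2) set" where
  "unipotent_radical_pts F v = {g \<in> SL2 F. g *v v = v \<and>
      (\<forall>w. vec_in F w \<longrightarrow> (\<exists>c\<in>F. g *v w - w = c *s v))}"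

text \<open>H^1(G, R) = Hom(G, R) with trivial coefficients; homomorphisms are taken
  extensional (zero outside G).\<close>
definition H1 :: "(complex^2^2) set \<Rightarrow> ((complex^2^2) \<Rightarrow> 'r::ring_1) set" where
  "H1 G = {f. (\<forall>x\<in>G. \<forall>y\<in>G. f (x ** y) = f x + f y) \<and> (\<forall>x. x \<notin> G \<longrightarrow> f x = 0)}"

definition H1_iso :: "((complex^2^2) \<Rightarrow> 'r::ring_1) set \<Rightarrow> ((complex^2^2) \<Rightarrow> 'r) set \<Rightarrow> bool" where
  "H1_iso A B \<longleftrightarrow> (\<exists>\<phi>. bij_betw \<phi> A B \<and>
      (\<forall>f\<in>A. \<forall>g\<in>A. \<phi> (\<lambda>x. f x + g x) = (\<lambda>x. \<phi> f x + \<phi> g x)) \<and>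
      (\<forall>r. \<forall>f\<in>A. \<phi> (\<lambda>x. r * f x) = (\<lambda>x. r * \<phi> f x)))"

end

theory Submission
  imports Defs
begin

definition om :: "nat \<Rightarrow> complex" where "om d = \<i> * complex_of_real (sqrt (real d))"

lemma om_sq: "om d * om d = - of_nat d"
  unfolding om_def by (simp add: algebra_simps flip: of_real_mult)
  
lemma cnj_om: "cnj (om d) = - om d" unfolding om_def by simp

lemma cnj_rat[simp]: "cnj (of_rat r) = of_rat r"
  by (cases r) (simp add: of_rat_rat)

lemma F_iff: "x \<in> imag_quad_field d \<longleftrightarrow> (\<exists>a b. x = of_rat a + of_rat b * om d)"
  unfolding imag_quad_field_def om_def by simp

lemma F_I: "x = of_rat a + of_rat b * om d \<Longrightarrow> x \<in> imag_quad_field d"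
  using F_iff by blast

lemma F_E: assumes "x \<in> imag_quad_field d" obtains a b where "x = of_rat a + of_rat b * om d"
  using assms F_iff by blast

lemma F_rat: "of_rat r \<in> imag_quad_field d"
  by (rule F_I[of _ r 0]) simp

lemma F_0: "0 \<in> imag_quad_field d" using F_rat[of 0 d] by simp
lemma F_1: "1 \<in> imag_quad_field d" using F_rat[of 1 d] by simp

lemma F_add: "x \<in> imag_quad_field d \<Longrightarrow> y \<in> imag_quad_field d \<Longrightarrow> x + y \<in> imag_quad_field d"
proof -
  assume "x \<in> imag_quad_field d" "y \<in> imag_quad_field d"
  then obtain a b a' b' where "x = of_rat a + of_rat b * om d" "y = of_rat a' + of_rat b' * om d"
    by (metis F_E)
  thus ?thesis by (intro F_I[of _ "a+a'" "b+b'"]) (simp add: of_rat_add algebra_simps)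
qed

lemma F_neg: "x \<in> imag_quad_field d \<Longrightarrow> - x \<in> imag_quad_field d"
proof -
  assume "x \<in> imag_quad_field d"
  then obtain a b where "x = of_rat a + of_rat b * om d" by (metis F_E)
  thus ?thesis by (intro F_I[of _ "-a" "-b"]) (simp add: of_rat_minus algebra_simps)
qed

lemma F_diff: "x \<in> imag_quad_field d \<Longrightarrow> y \<in> imag_quad_field d \<Longrightarrow> x - y \<in> imag_quad_field d"
  using F_add[OF _ F_neg] by (metis diff_conv_add_uminus)

lemma F_mult: "x \<in> imag_quad_field d \<Longrightarrow> y \<in> imag_quad_field d \<Longrightarrow> x * y \<in> imag_quad_field d"
proof -
  assume "x \<in> imag_quad_field d" "y \<in> imag_quad_field d"
  then obtain a b a' b' where xy: "x = of_rat a + of_rat b * om d" "y = of_rat a' + of_rat b' * om d"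
    by (metis F_E)
  have "x * y
     = of_rat a * of_rat a' + of_rat b * of_rat b' * (om d * om d) + (of_rat a * of_rat b' + of_rat b * of_rat a') * om d"
    unfolding xy by (simp add: algebra_simps)
  also have "\<dots> = of_rat (a*a' - of_nat d * b * b') + of_rat (a*b' + b*a') * om d"
    by (simp add: om_sq of_rat_add of_rat_mult of_rat_diff algebra_simps)
  finally show ?thesis by (rule F_I)
qed

lemma F_cnj: "x \<in> imag_quad_field d \<Longrightarrow> cnj x \<in> imag_quad_field d"
proof -
  assume "x \<in> imag_quad_field d"
  then obtain a b where "x = of_rat a + of_rat b * om d" by (metis F_E)
  thus ?thesis by (intro F_I[of _ "a" "-b"]) (simp add: of_rat_minus cnj_om)
qed

lemma F_norm: "x \<in> imag_quad_field d \<Longrightarrow> \<exists>r. x * cnj x = of_rat r \<and> r \<ge> 0 \<and> (r = 0 \<longrightarrow> x = 0 \<or> d = 0)"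
proof -
  assume "x \<in> imag_quad_field d"
  then obtain a b where x: "x = of_rat a + of_rat b * om d" by (metis F_E)
  have "x * cnj x = of_rat a * of_rat a - of_rat b * of_rat b * (om d * om d)"
    unfolding x by (simp add: cnj_om algebra_simps)
  also have "\<dots> = of_rat (a*a + of_nat d * b * b)"
    by (simp add: om_sq of_rat_add of_rat_mult algebra_simps)
  finally have e: "x * cnj x = of_rat (a*a + of_nat d * b * b)" .
  have nn: "a*a + of_nat d * b * b \<ge> 0" by (intro add_nonneg_nonneg) (simp_all add: mult.assoc)
  have z: "a*a + of_nat d * b * b = 0 \<longrightarrow> (x = 0 \<or> d = 0)"
  proof
    assume h: "a*a + of_nat d * b * b = 0"
    have "a * a \<ge> 0" "of_nat d * b * b \<ge> 0" by (simp_all add: mult.assoc)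
    hence "a*a = 0" "of_nat d * b * b = 0" using h by linarith+
    thus "x = 0 \<or> d = 0" unfolding x by auto
  qed
  show ?thesis using e nn z by blast
qed

lemma F_inverse: "x \<in> imag_quad_field d \<Longrightarrow> inverse x \<in> imag_quad_field d"
proof -
  assume x: "x \<in> imag_quad_field d"
  obtain r where r: "x * cnj x = of_rat r" using F_norm[OF x] by blast
  show ?thesis
  proof (cases "x = 0")
    case True thus ?thesis using F_0 by simp
  next
    case False
    hence "r \<noteq> 0" using r by auto
    have "x * (cnj x * of_rat (inverse r)) = of_rat r * of_rat (inverse r)" using r by (simp add: mult.assoc[symmetric])
    also have "\<dots> = 1" using \<open>r \<noteq> 0\<close> by (simp flip: of_rat_mult)
    finally have "inverse x = cnj x * of_rat (inverse r)" by (simp add: inverse_unique)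
    thus ?thesis using F_mult[OF F_cnj[OF x] F_rat] by simp
  qed
qed

lemma F_divide: "x \<in> imag_quad_field d \<Longrightarrow> y \<in> imag_quad_field d \<Longrightarrow> x / y \<in> imag_quad_field d"
  by (simp add: divide_inverse F_mult F_inverse)

lemma F_power: "x \<in> imag_quad_field d \<Longrightarrow> x ^ n \<in> imag_quad_field d"
  by (induction n) (simp_all add: F_1 F_mult)

definition Lat :: "nat \<Rightarrow> int \<Rightarrow> complex \<Rightarrow> bool" where
  "Lat d K z \<longleftrightarrow> K > 0 \<and> (\<exists>p q::int. z = (of_int p + of_int q * om d) / of_int K)"

definition BD :: "nat \<Rightarrow> complex \<Rightarrow> bool" where
  "BD d z \<longleftrightarrow> (\<exists>K. \<forall>k. Lat d K (z ^ k))"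

lemma Lat_dvd: assumes "Lat d K z" "K dvd M" "M > 0" shows "Lat d M z"
proof -
  obtain p q where z: "z = (of_int p + of_int q * om d) / of_int K" and K: "K > 0" using assms(1) Lat_def by auto
  obtain e where M: "M = K * e" using assms(2) by blast
  have e0: "(of_int e :: complex) \<noteq> 0" using M assms(3) by auto
  have K0: "(of_int K :: complex) \<noteq> 0" using K by auto
  have "z = (of_int (p*e) + of_int (q*e) * om d) / of_int M"
    unfolding z M using K0 e0 by (simp add: field_simps)
  thus ?thesis unfolding Lat_def using assms(3) by blast
qed

lemma Lat_0: "K > 0 \<Longrightarrow> Lat d K 0"
  unfolding Lat_def by (rule conjI, simp, rule exI[of _ 0], rule exI[of _ 0]) simp

lemma Lat_int: "K > 0 \<Longrightarrow> Lat d K (of_int m)"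
  unfolding Lat_def by (rule conjI, simp, rule exI[of _ "m*K"], rule exI[of _ 0]) simp

lemma Lat_add: assumes "Lat d K a" "Lat d K b" shows "Lat d K (a + b)"
proof -
  obtain p q where a: "a = (of_int p + of_int q * om d) / of_int K" and K: "K > 0" using assms(1) Lat_def by auto
  obtain p' q' where b: "b = (of_int p' + of_int q' * om d) / of_int K" using assms(2) Lat_def by auto
  have "a + b = (of_int (p+p') + of_int (q+q') * om d) / of_int K"
    unfolding a b by (simp add: add_divide_distrib[symmetric] algebra_simps)
  thus ?thesis unfolding Lat_def using K by blast
qed

lemma Lat_intmult: assumes "Lat d K a" shows "Lat d K (of_int m * a)"
proof -
  obtain p q where a: "a = (of_int p + of_int q * om d) / of_int K" and K: "K > 0" using assms(1) Lat_def by auto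
  have "of_int m * a = (of_int (m*p) + of_int (m*q) * om d) / of_int K"
    unfolding a by (simp add: field_simps)
  thus ?thesis unfolding Lat_def using K by blast
qed

lemma Lat_natmult: assumes "Lat d K a" shows "Lat d K (of_nat m * a)"
  using Lat_intmult[OF assms, of "int m"] by simp

lemma Lat_neg: assumes "Lat d K a" shows "Lat d K (- a)"
  using Lat_intmult[OF assms, of "-1"] by simp

lemma Lat_sum: "finite A \<Longrightarrow> K > 0 \<Longrightarrow> (\<And>i. i \<in> A \<Longrightarrow> Lat d K (f i)) \<Longrightarrow> Lat d K (\<Sum>i\<in>A. f i)"
  by (induction A rule: finite_induct) (auto intro: Lat_add Lat_0)

lemma Lat_mult: assumes "Lat d K a" "Lat d M b" shows "Lat d (K*M) (a * b)"
proof -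
  obtain p q where a: "a = (of_int p + of_int q * om d) / of_int K" and K: "K > 0" using assms(1) Lat_def by auto
  obtain p' q' where b: "b = (of_int p' + of_int q' * om d) / of_int M" and M: "M > 0" using assms(2) Lat_def by auto
  have "a * b = (of_int p * of_int p' + of_int q * of_int q' * (om d * om d) + (of_int p * of_int q' + of_int q * of_int p') * om d) / (of_int K * of_int M)"
    unfolding a b by (simp add: field_simps)
  also have "\<dots> = (of_int (p*p' - int d * q * q') + of_int (p*q' + q*p') * om d) / of_int (K*M)"
    by (simp add: om_sq algebra_simps)
  finally have "a * b = (of_int (p*p' - int d * q * q') + of_int (p*q' + q*p') * om d) / of_int (K*M)" .
  thus ?thesis unfolding Lat_def using K M by (metis mult_pos_pos)
qed

lemma Lat_cnj: assumes "Lat d K a" shows "Lat d K (cnj a)"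
proof -
  obtain p q where a: "a = (of_int p + of_int q * om d) / of_int K" and K: "K > 0" using assms(1) Lat_def by auto
  have "cnj a = (of_int p + of_int (-q) * om d) / of_int K"
    unfolding a by (simp add: cnj_om)
  thus ?thesis unfolding Lat_def using K by blast
qed

lemma Lat_pow: assumes "Lat d K a" shows "Lat d (K^n) (a ^ n)"
proof (induction n)
  case 0 thus ?case using Lat_int[of 1 d 1] by simp
next
  case (Suc n) thus ?case using Lat_mult[OF assms Suc] by simp
qed

lemma rat_Fract_complex: "b \<noteq> 0 \<Longrightarrow> (of_rat (Fract a b) :: complex) = of_int a / of_int b"
  by (simp add: of_rat_rat)

lemma Lat_F: assumes "z \<in> imag_quad_field d" shows "\<exists>K. Lat d K z"
proof -
  obtain a b where z: "z = of_rat a + of_rat b * om d" using assms F_E by blast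
  obtain p1 q1 where a: "a = Fract p1 q1" "q1 > 0" by (cases a) auto
  obtain p2 q2 where b: "b = Fract p2 q2" "q2 > 0" by (cases b) auto
  have "z = (of_int (p1*q2) + of_int (p2*q1) * om d) / of_int (q1*q2)"
    unfolding z a b using a(2) b(2) by (simp add: field_simps rat_Fract_complex)
  thus ?thesis unfolding Lat_def using a(2) b(2) by (metis mult_pos_pos)
qed

lemma Lat_pos: "Lat d K z \<Longrightarrow> K > 0" unfolding Lat_def by simp

lemma BD_mult: assumes "BD d a" "BD d b" shows "BD d (a * b)"
proof -
  obtain K where K: "\<forall>k. Lat d K (a^k)" using assms(1) BD_def by blast
  obtain M where M: "\<forall>k. Lat d M (b^k)" using assms(2) BD_def by blast
  have "\<forall>k. Lat d (K*M) ((a*b)^k)" using Lat_mult K M by (simp add: power_mult_distrib)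
  thus ?thesis unfolding BD_def by blast
qed

lemma BD_cnj: assumes "BD d a" shows "BD d (cnj a)"
proof -
  obtain K where K: "\<forall>k. Lat d K (a^k)" using assms(1) BD_def by blast
  have "\<forall>k. Lat d K ((cnj a)^k)" using Lat_cnj K by (metis complex_cnj_power)
  thus ?thesis unfolding BD_def by blast
qed

lemma BD_int: "BD d (of_int m)"
proof -
  have "\<forall>k. Lat d 1 ((of_int m)^k)" using Lat_int[of 1 d] by (metis of_int_power zero_less_one)
  thus ?thesis unfolding BD_def by blast
qed

lemma BD_neg: assumes "BD d a" shows "BD d (- a)"
  using BD_mult[OF BD_int[of d "-1"] assms] by simp

lemma BD_add: assumes "BD d a" "BD d b" shows "BD d (a + b)"
proof -
  obtain K where K: "\<forall>k. Lat d K (a^k)" using assms(1) BD_def by blast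
  obtain M where M: "\<forall>k. Lat d M (b^k)" using assms(2) BD_def by blast
  have "K > 0" using Lat_pos[OF K[rule_format, of 0]] .
  moreover have "M > 0" using Lat_pos[OF M[rule_format, of 0]] .
  ultimately have KM: "K * M > 0" by simp
  have "\<forall>k. Lat d (K*M) ((a+b)^k)"
  proof
    fix k
    show "Lat d (K*M) ((a+b)^k)" unfolding binomial_ring
      by (rule Lat_sum) (use KM in \<open>auto intro!: Lat_natmult Lat_mult K[rule_format] M[rule_format]\<close>)
  qed
  thus ?thesis unfolding BD_def by blast
qed

lemma BD_diff: "BD d a \<Longrightarrow> BD d b \<Longrightarrow> BD d (a - b)"
  using BD_add[OF _ BD_neg] by (metis diff_conv_add_uminus)

lemma BD_root: assumes "z \<in> imag_quad_field d" "n > 0" "BD d (z ^ n)" shows "BD d z"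
proof -
  obtain G where G: "Lat d G z" using Lat_F[OF assms(1)] by blast
  obtain K where K: "\<forall>k. Lat d K ((z^n)^k)" using assms(3) BD_def by blast
  have Gp: "G > 0" using G Lat_pos by blast
  have Kp: "K > 0" using Lat_pos[OF K[rule_format, of 0]] .
  have "\<forall>k. Lat d (K * G^n) (z^k)"
  proof
    fix k
    have "z^k = z^(n*(k div n) + k mod n)" by simp
    also have "\<dots> = (z^n)^(k div n) * z^(k mod n)" by (simp only: power_add power_mult)
    finally have e: "z^k = (z^n)^(k div n) * z^(k mod n)" .
    have "Lat d (K * G^(k mod n)) (z^k)" unfolding e by (rule Lat_mult[OF K[rule_format] Lat_pow[OF G]])
    moreover have "K * G^(k mod n) dvd K * G^n"
      by (intro mult_dvd_mono dvd_refl le_imp_power_dvd) (use assms(2) in simp)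
    moreover have "K * G^n > 0" using Kp Gp by simp
    ultimately show "Lat d (K * G^n) (z^k)" by (rule Lat_dvd)
  qed
  thus ?thesis unfolding BD_def by blast
qed

lemma rat_bounded_den: fixes r :: rat and K :: int
  assumes "K > 0" "\<forall>k. \<exists>p. of_int K * r^k = of_int p"
  shows "\<exists>m. r = of_int m"
proof -
  obtain a b where r: "r = Fract a b" "b > 0" "coprime a b" by (cases r) auto
  have dv: "b^k dvd K" for k
  proof -
    obtain p where p: "of_int K * r^k = of_int p" using assms(2) by blast
    have r': "r = of_int a / of_int b" by (simp add: r(1) Fract_of_int_quotient)
    have "of_int K * (of_int a)^k / (of_int b)^k = (of_int p::rat)" using p by (simp add: r' power_divide)
    hence "of_int K * (of_int a)^k = (of_int p * (of_int b)^k :: rat)" using r(2) by (simp add: divide_eq_eq)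
    hence "of_int (K * a^k) = (of_int (p * b^k) :: rat)" by simp
    hence "K * a^k = p * b^k" by (simp only: of_int_eq_iff)
    hence "b^k dvd K * a^k" by simp
    moreover have "coprime (b^k) (a^k)" using r(3) by (simp add: coprime_commute)
    ultimately show ?thesis by (metis coprime_dvd_mult_left_iff)
  qed
  have "b = 1"
  proof (rule ccontr)
    assume "b \<noteq> 1"
    hence b2: "b \<ge> 2" using r(2) by simp
    have "b ^ nat K \<le> K" by (rule zdvd_imp_le[OF dv[of "nat K"] assms(1)])
    moreover have "(2::int) ^ nat K \<le> b ^ nat K" using power_mono[of 2 b "nat K"] b2 by simp
    moreover have "int (nat K) < 2 ^ nat K" by (rule of_nat_less_two_power)
    moreover have "int (nat K) = K" using assms(1) by simp
    ultimately show False by linarith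
  qed
  thus ?thesis using r(1) by (simp add: Fract_of_int_eq)
qed

lemma Im_rat[simp]: "Im (of_rat r) = 0"
  by (cases r) (simp add: of_rat_rat)

lemma Im_om: "Im (om d) = sqrt (real d)" unfolding om_def by simp
lemma Re_om: "Re (om d) = 0" unfolding om_def by simp

lemma Lat_real: assumes "Lat d K z" "Im z = 0" "d > 0" shows "\<exists>p. of_int K * z = of_int p"
proof -
  obtain p q where z: "z = (of_int p + of_int q * om d) / of_int K" and K: "K > 0" using assms(1) Lat_def by auto
  have "Im z = of_int q * sqrt (real d) / of_int K" unfolding z by (simp add: Im_om)
  hence "q = 0" using assms(2,3) K by simp
  hence "of_int K * z = of_int p" unfolding z using K by simp
  thus ?thesis by blast
qed

lemma BD_rat: assumes "BD d (of_rat r)" "d > 0" shows "\<exists>m. r = of_int m"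
proof -
  obtain K where K: "\<forall>k. Lat d K ((of_rat r)^k)" using assms(1) BD_def by blast
  have Kp: "K > 0" using Lat_pos[OF K[rule_format, of 0]] .
  have "\<forall>k. \<exists>p. of_int K * r^k = of_int p"
  proof
    fix k
    have L: "Lat d K (of_rat (r^k))" using K by (simp add: of_rat_power)
    obtain p where "of_int K * (of_rat (r^k) :: complex) = of_int p" using Lat_real[OF L _ assms(2)] by auto
    hence "(of_rat (of_int K * r^k) :: complex) = of_rat (of_int p)" by (simp add: of_rat_mult)
    hence "of_int K * r^k = of_int p" by (simp only: of_rat_eq_iff)
    thus "\<exists>p. of_int K * r^k = of_int p" by blast
  qed
  thus ?thesis using rat_bounded_den[OF Kp] by blast
qed

lemma poly_int_sum: "poly (map_poly of_int p) (z::complex) = (\<Sum>i\<le>degree p. of_int (coeff p i) * z^i)"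
proof -
  have "degree (map_poly (of_int :: int \<Rightarrow> complex) p) = degree p" by (rule degree_map_poly) simp
  thus ?thesis by (simp add: poly_altdef coeff_map_poly)
qed

lemma alg_int_BD: assumes "alg_int z" "z \<in> imag_quad_field d" shows "BD d z"
proof -
  obtain p where lc: "lead_coeff p = 1" and pz: "poly (map_poly of_int p) z = 0"
    using assms(1) alg_int_def by blast
  define n where "n = degree p"
  have sum0: "(\<Sum>i\<le>n. of_int (coeff p i) * z^i) = 0" using pz poly_int_sum n_def by simp
  have n0: "n > 0"
  proof (rule ccontr)
    assume "\<not> n > 0" hence "n = 0" by simp
    thus False using sum0 lc n_def by simp
  qed
  have zn: "z^n = - (\<Sum>i<n. of_int (coeff p i) * z^i)"
  proof -
    have "(\<Sum>i\<le>n. of_int (coeff p i) * z^i) = (\<Sum>i<n. of_int (coeff p i) * z^i) + of_int (coeff p n) * z^n"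
      by (simp add: lessThan_Suc_atMost[symmetric])
    thus ?thesis using sum0 lc n_def by (simp add: eq_neg_iff_add_eq_0 add.commute)
  qed
  have "\<forall>j. \<exists>K. Lat d K (z^j)" using Lat_F[OF F_power[OF assms(2)]] by blast
  then obtain Kf where Kf: "\<And>j. Lat d (Kf j) (z^j)" by metis
  define K where "K = (\<Prod>j<n. Kf j)"
  have Kfp: "Kf j > 0" for j using Lat_pos[OF Kf] .
  have Kp: "K > 0" unfolding K_def by (rule prod_pos) (use Kfp in auto)
  have small: "Lat d K (z^j)" if "j < n" for j
    by (rule Lat_dvd[OF Kf _ Kp]) (unfold K_def, rule dvd_prodI, use that in auto)
  have "Lat d K (z^k)" for k
  proof (induction k rule: less_induct)
    case (less k)
    show ?case
    proof (cases "k < n")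
      case True thus ?thesis by (rule small)
    next
      case False
      hence "z^k = z^(k-n) * z^n" by (simp add: power_add[symmetric])
      also have "\<dots> = - (\<Sum>i<n. of_int (coeff p i) * z^(k-n+i))"
        unfolding zn by (simp add: sum_distrib_left power_add algebra_simps)
      finally have e: "z^k = - (\<Sum>i<n. of_int (coeff p i) * z^(k-n+i))" .
      show ?thesis unfolding e
        by (intro Lat_neg Lat_sum Lat_intmult less.IH) (use False n0 Kp in auto)
    qed
  qed
  thus ?thesis unfolding BD_def by blast
qed

inductive_set ZS :: "complex \<Rightarrow> complex set" for t where
  ZS_pow: "t^i \<in> ZS t"
| ZS_add: "a \<in> ZS t \<Longrightarrow> b \<in> ZS t \<Longrightarrow> a + b \<in> ZS t"
| ZS_neg: "a \<in> ZS t \<Longrightarrow> - a \<in> ZS t"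

lemma ZS_tmult: "a \<in> ZS t \<Longrightarrow> t * a \<in> ZS t"
proof (induction rule: ZS.induct)
  case (ZS_pow i) thus ?case using ZS.ZS_pow[of t "Suc i"] by simp
next
  case (ZS_add a b) thus ?case using ZS.ZS_add by (simp add: distrib_left)
next
  case (ZS_neg a) thus ?case using ZS.ZS_neg by simp
qed

lemma ZS_0: "0 \<in> ZS t" using ZS_add[OF ZS_pow[of t 0] ZS_neg[OF ZS_pow[of t 0]]] by simp
lemma ZS_1: "1 \<in> ZS t" using ZS_pow[of t 0] by simp

lemma ZS_Lat: "a \<in> ZS t \<Longrightarrow> (\<forall>k. Lat d K (t^k)) \<Longrightarrow> Lat d K a"
  by (induction rule: ZS.induct) (auto intro: Lat_add Lat_neg)

lemma eig_BD: assumes "BD d t" "s \<in> imag_quad_field d" "s * s - t * s + 1 = 0" shows "BD d s"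
proof -
  obtain K where K: "\<forall>k. Lat d K (t^k)" using assms(1) BD_def by blast
  obtain G where G: "Lat d G s" using Lat_F[OF assms(2)] by blast
  have Kp: "K > 0" using Lat_pos[OF K[rule_format, of 0]] .
  have Gp: "G > 0" using Lat_pos[OF G] .
  have rep: "\<exists>a b. a \<in> ZS t \<and> b \<in> ZS t \<and> s^k = a + b * s" for k
  proof (induction k)
    case 0 show ?case using ZS_0 ZS_1 by (intro exI[of _ 1] exI[of _ 0]) simp
  next
    case (Suc k)
    then obtain a b where ab: "a \<in> ZS t" "b \<in> ZS t" "s^k = a + b * s" by blast
    have "s^Suc k = s * (a + b * s)" using ab(3) by simp
    also have "\<dots> = a * s + b * (s * s)" by (simp add: algebra_simps)
    also have "s * s = t * s - 1" using assms(3) by (simp add: algebra_simps eq_neg_iff_add_eq_0)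
    finally have "s^Suc k = - b + (a + t * b) * s" by (simp add: algebra_simps)
    moreover have "- b \<in> ZS t" "a + t * b \<in> ZS t" using ab by (auto intro: ZS_neg ZS_add ZS_tmult)
    ultimately show ?case by blast
  qed
  have "Lat d (K*G) (s^k)" for k
  proof -
    obtain a b where ab: "a \<in> ZS t" "b \<in> ZS t" "s^k = a + b * s" using rep by blast
    have "Lat d K a" "Lat d K b" using ZS_Lat[OF ab(1) K] ZS_Lat[OF ab(2) K] by auto
    have "Lat d (K*G) a" by (rule Lat_dvd[OF \<open>Lat d K a\<close>]) (use Kp Gp in auto)
    moreover have "Lat d (K*G) (b * s)" by (rule Lat_mult[OF \<open>Lat d K b\<close> G])
    ultimately show ?thesis unfolding ab(3) by (rule Lat_add)
  qed
  thus ?thesis unfolding BD_def by blast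
qed

lemma norm_int: assumes "s \<in> imag_quad_field d" "BD d s" "d > 0"
  shows "\<exists>n::int. s * cnj s = of_int n \<and> n \<ge> 0"
proof -
  obtain r where r: "s * cnj s = of_rat r" "r \<ge> 0" using F_norm[OF assms(1)] by blast
  have "BD d (of_rat r)" using BD_mult[OF assms(2) BD_cnj[OF assms(2)]] r(1) by simp
  then obtain m where "r = of_int m" using BD_rat assms(3) by blast
  thus ?thesis using r by auto
qed

lemma unit_lemma: assumes "BD d t" "s \<in> imag_quad_field d" "s * s - t * s + 1 = 0" "d > 0"
  shows "s * cnj s = 1" "BD d s"
proof -
  show Bs: "BD d s" by (rule eig_BD[OF assms(1-3)])
  have s0: "s \<noteq> 0" using assms(3) by auto
  define u where "u = inverse s"
  have su: "s * u = 1" using s0 u_def by simp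
  have uF: "u \<in> imag_quad_field d" using F_inverse[OF assms(2)] u_def by simp
  have "u * u - t * u + 1 = (u * u) * (s * s - t * s + 1)"
    using su by (simp add: algebra_simps)
  hence ueq: "u * u - t * u + 1 = 0" using assms(3) by simp
  have Bu: "BD d u" by (rule eig_BD[OF assms(1) uF ueq])
  obtain n1 where n1: "s * cnj s = of_int n1" "n1 \<ge> 0" using norm_int[OF assms(2) Bs assms(4)] by blast
  obtain n2 where n2: "u * cnj u = of_int n2" "n2 \<ge> 0" using norm_int[OF uF Bu assms(4)] by blast
  have "(s * cnj s) * (u * cnj u) = (s * u) * cnj (s * u)" by (simp add: algebra_simps)
  hence "of_int (n1 * n2) = (1::complex)" using n1 n2 su by simp
  hence "n1 * n2 = 1" by (metis of_int_eq_1_iff)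
  hence "n1 = 1" using n1(2) pos_zmult_eq_1_iff_lemma[of n1 n2] by linarith
  thus "s * cnj s = 1" using n1 by simp
qed

lemma sqf_t1: "(r::nat) * r dvd r * r * e" by (rule dvd_triv_left)
lemma sqf_t2: "squarefree (x::nat) \<Longrightarrow> r * r dvd x \<Longrightarrow> r = 1"
  unfolding squarefree_def power2_eq_square by simp
lemma sqf_nat: assumes "squarefree (d::nat)" "d = r * r * e" shows "r = 1"
  using sqf_t2[OF assms(1)] sqf_t1[of r e] assms(2) by metis

lemma unit_sq: assumes "is_unit ((p::int) * p)" shows "p * p = 1"
proof -
  have "p * p dvd 1" using assms by simp
  hence "p * p \<le> 1" by (rule zdvd_imp_le) simp
  moreover have "p * p \<noteq> 0" using assms by auto
  moreover have "p * p \<ge> 0" by (rule zero_le_square)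
  ultimately show ?thesis by linarith
qed

lemma NT1: assumes "squarefree (d::nat)" "of_nat d * b * b = (1::rat)" shows "d = 1"
proof -
  obtain p q where b: "b = of_int p / of_int q" "q > 0" "coprime p q"
    by (cases b) (auto simp: Fract_of_int_quotient)
  have "of_nat d * of_int p * of_int p = (of_int q * of_int q :: rat)"
    using assms(2) b(2) unfolding b(1) by (simp add: field_simps)
  hence e: "int d * p * p = q * q" by (metis of_int_eq_iff of_int_mult of_int_of_nat_eq)
  have dv: "p * p dvd q * q" using e by (metis dvd_triv_right mult.assoc)
  have cop: "coprime (p * p) (q * q)" using b(3) by simp
  have "is_unit (p * p)" by (rule coprime_common_divisor[OF cop dvd_refl dv])
  hence pp: "p * p = 1" by (rule unit_sq)
  have "int d = int d * (p * p)" using pp by simp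
  also have "\<dots> = q * q" using e by (simp only: mult.assoc)
  finally have dq: "int d = q * q" .
  have "d = nat q * nat q * 1" using dq b(2) by (simp add: nat_mult_distrib[symmetric])
  hence "nat q = 1" by (rule sqf_nat[OF assms(1)])
  thus ?thesis using \<open>d = nat q * nat q * 1\<close> by simp
qed

lemma NT3: assumes "squarefree (d::nat)" "4 * of_nat d * b * b = (3::rat)" shows "d = 3"
proof -
  obtain p q where b: "b = of_int p / of_int q" "q > 0" "coprime p q"
    by (cases b) (auto simp: Fract_of_int_quotient)
  have "4 * of_nat d * of_int p * of_int p = (3 * of_int q * of_int q :: rat)"
    using assms(2) b(2) unfolding b(1) by (simp add: field_simps)
  hence "of_int (4 * int d * p * p) = (of_int (3 * q * q) :: rat)" by simp
  hence e: "4 * int d * p * p = 3 * q * q" by (simp only: of_int_eq_iff)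
  have dv: "p * p dvd (q * q) * 3" using e by (metis dvd_triv_right mult.assoc mult.commute)
  have cop: "coprime (p * p) (q * q)" using b(3) by simp
  have "p * p dvd 3" using dv cop by (simp add: coprime_dvd_mult_right_iff)
  hence "p * p \<le> 3" by (rule zdvd_imp_le) simp
  moreover have "p \<noteq> 0"
  proof
    assume "p = 0" hence "3 * q * q = 0" using e by simp
    thus False using b(2) by simp
  qed
  moreover have sq: "\<bar>p\<bar> * \<bar>p\<bar> = p * p" by (rule abs_mult_self_eq)
  ultimately have a1: "\<bar>p\<bar> \<le> 1"
  proof -
    have "\<not> \<bar>p\<bar> \<ge> 2"
    proof
      assume "\<bar>p\<bar> \<ge> 2"
      hence "\<bar>p\<bar> * \<bar>p\<bar> \<ge> 2 * 2" by (intro mult_mono) auto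
      thus False using sq \<open>p * p \<le> 3\<close> by linarith
    qed
    thus ?thesis by linarith
  qed
  have "\<bar>p\<bar> = 1" using a1 \<open>p \<noteq> 0\<close> by linarith
  hence pp: "p * p = 1" using sq by simp
  have "4 * int d = 4 * int d * (p * p)" using pp by simp
  also have "\<dots> = 3 * q * q" using e by (simp only: mult.assoc)
  finally have e2: "4 * int d = 3 * q * q" .
  have "even (3 * q * q)" unfolding e2[symmetric] by simp
  hence "even q" by simp
  then obtain r where r: "q = 2 * r" by blast
  have "4 * int d = 4 * (3 * r * r)" using e2 unfolding r by simp
  hence dr: "int d = 3 * r * r" by simp
  have "r > 0" using r b(2) by simp
  hence "d = nat r * nat r * 3" using dr by (simp add: nat_mult_distrib[symmetric] mult.commute)
  hence "nat r = 1" by (rule sqf_nat[OF assms(1)])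
  thus ?thesis using \<open>d = nat r * nat r * 3\<close> by simp
qed

lemma pm_one: assumes "c \<in> imag_quad_field d" "c * cnj c = 1" "BD d c" "squarefree d" "d \<noteq> 1" "d \<noteq> 3"
  shows "c = 1 \<or> c = -1"
proof -
  have d0: "d > 0" using assms(4) by (cases "d = 0") auto
  obtain a b where c: "c = of_rat a + of_rat b * om d" using assms(1) F_E by blast
  have cc: "cnj c = of_rat a - of_rat b * om d" unfolding c by (simp add: cnj_om)
  have "c + cnj c = of_rat (2 * a)" unfolding cc by (simp add: c of_rat_mult)
  moreover have "BD d (c + cnj c)" by (rule BD_add[OF assms(3) BD_cnj[OF assms(3)]])
  ultimately obtain m where m: "2 * a = of_int m" using BD_rat d0 by metis
  have "c * cnj c = (of_rat a + of_rat b * om d) * (of_rat a - of_rat b * om d)"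
    using cc c by simp
  also have "\<dots> = of_rat a * of_rat a - of_rat b * of_rat b * (om d * om d)"
    by (simp add: algebra_simps)
  also have "\<dots> = of_rat (a*a + of_nat d * b * b)"
    by (simp add: om_sq of_rat_add of_rat_mult algebra_simps)
  finally have "(of_rat (a*a + of_nat d * b * b) :: complex) = of_rat 1" using assms(2) by simp
  hence N: "a*a + of_nat d * b * b = 1" by (simp only: of_rat_eq_iff)
  have dbb: "of_nat d * b * b \<ge> 0" by (simp add: mult.assoc)
  have am: "a = of_int m / 2" using m by simp
  have "of_int (m * m) = 4 * (a * a)" unfolding am by simp
  also have "\<dots> \<le> (4::rat)" using N dbb by linarith
  finally have "m * m \<le> 4" by (simp only: of_int_le_iff[symmetric])
  hence "\<bar>m\<bar> \<le> 2"
  proof -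
    have sq: "\<bar>m\<bar> * \<bar>m\<bar> = m * m" by (rule abs_mult_self_eq)
    have "\<not> \<bar>m\<bar> \<ge> 3"
    proof
      assume "\<bar>m\<bar> \<ge> 3"
      hence "\<bar>m\<bar> * \<bar>m\<bar> \<ge> 3 * 3" by (intro mult_mono) auto
      thus False using sq \<open>m * m \<le> 4\<close> by linarith
    qed
    thus ?thesis by linarith
  qed
  hence "m \<in> {-2, -1, 0, 1, 2}" by auto
  moreover {
    assume "m = 0"
    hence "a = 0" using am by simp
    hence "of_nat d * b * b = 1" using N by simp
    hence "d = 1" by (rule NT1[OF assms(4)])
    hence False using assms(5) by simp
  }
  moreover {
    assume "m = 1 \<or> m = -1"
    hence "a * a = 1/4" unfolding am by (elim disjE) simp_all
    hence "4 * of_nat d * b * b = (3::rat)" using N by (simp add: algebra_simps)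
    hence "d = 3" by (rule NT3[OF assms(4)])
    hence False using assms(6) by simp
  }
  moreover {
    assume m2: "m = 2 \<or> m = -2"
    hence "a * a = 1" unfolding am by (elim disjE) simp_all
    hence "of_nat d * b * b = 0" using N by simp
    hence "b = 0" using d0 by simp
    hence ?thesis using m2 am c by auto
  }
  ultimately show ?thesis by auto
qed

type_synonym cmat = "complex^2^2"

lemma mult_2x2: "((A::cmat) ** B) $ i $ j = A$i$1 * B$1$j + A$i$2 * B$2$j"
  by (simp add: matrix_matrix_mult_def sum_2)

lemma mv_2x2: "((A::cmat) *v x) $ i = A$i$1 * x$1 + A$i$2 * x$2"
  by (simp add: matrix_vector_mult_def sum_2)

lemma SL2_mult: assumes "A \<in> SL2 (imag_quad_field d)" "B \<in> SL2 (imag_quad_field d)"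
  shows "A ** B \<in> SL2 (imag_quad_field d)"
  using assms unfolding SL2_def by (auto simp: mult_2x2 det_mul intro!: F_add F_mult)

fun mpow :: "cmat \<Rightarrow> nat \<Rightarrow> cmat" where
  "mpow x 0 = mat 1"
| "mpow x (Suc k) = x ** mpow x k"

lemma mpow_add: "mpow x (i + j) = mpow x i ** mpow x j"
  by (induction i) (simp_all add: matrix_mul_assoc)

lemma mpow_Gamma: "is_subgroup \<Gamma> G \<Longrightarrow> x \<in> \<Gamma> \<Longrightarrow> mpow x k \<in> \<Gamma>"
  unfolding is_subgroup_def by (induction k) auto

lemma mpow_eig: assumes "x *v v = c *s v" shows "mpow x k *v v = c^k *s v"
proof (induction k)
  case 0 thus ?case by simp
next
  case (Suc k)
  have "mpow x (Suc k) *v v = x *v (mpow x k *v v)" by (simp add: matrix_vector_mul_assoc)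
  also have "\<dots> = c^k *s (x *v v)" using Suc by (simp add: vector_scalar_commute)
  also have "\<dots> = c^Suc k *s v" using assms by (simp add: vector_smult_assoc mult.commute)
  finally show ?case .
qed

lemma mpow_det: "det x = 1 \<Longrightarrow> det (mpow x k) = 1"
  by (induction k) (simp_all add: det_mul)

definition adj2 :: "cmat \<Rightarrow> cmat" where
  "adj2 A = vector [vector [A$2$2, - A$1$2], vector [- A$2$1, A$1$1]]"

lemma adj2_comp: "adj2 A $1$1 = A$2$2" "adj2 A $1$2 = - A$1$2" "adj2 A $2$1 = - A$2$1" "adj2 A $2$2 = A$1$1"
  unfolding adj2_def by simp_all

lemma mat1_comp: "(mat 1 :: cmat) $1$1 = 1" "(mat 1 :: cmat) $1$2 = 0" "(mat 1 :: cmat) $2$1 = 0" "(mat 1 :: cmat) $2$2 = 1"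
  by (simp_all add: mat_def)

lemma adj2_right: "det (A::cmat) = 1 \<Longrightarrow> A ** adj2 A = mat 1"
  unfolding vec_eq_iff forall_2 by (simp add: mult_2x2 adj2_comp mat1_comp det_2 algebra_simps)

lemma adj2_left: "det (A::cmat) = 1 \<Longrightarrow> adj2 A ** A = mat 1"
  unfolding vec_eq_iff forall_2 by (simp add: mult_2x2 adj2_comp mat1_comp det_2 algebra_simps)

lemma vec_nz: "(v::complex^2) \<noteq> 0 \<Longrightarrow> v$1 \<noteq> 0 \<or> v$2 \<noteq> 0"
  unfolding vec_eq_iff forall_2 by simp

lemma eig_eq: assumes "(x::cmat) *v v = c *s v" "v \<noteq> 0"
  shows "c * c - (x$1$1 + x$2$2) * c + det x = 0"
proof -
  have e1: "(x$1$1 - c) * v$1 + x$1$2 * v$2 = 0" using arg_cong[OF assms(1), of "\<lambda>u. u$1"]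
    by (simp add: mv_2x2 algebra_simps)
  have e2: "x$2$1 * v$1 + (x$2$2 - c) * v$2 = 0" using arg_cong[OF assms(1), of "\<lambda>u. u$2"]
    by (simp add: mv_2x2 algebra_simps)
  define D where "D = (x$1$1 - c) * (x$2$2 - c) - x$1$2 * x$2$1"
  have "D * v$1 = (x$2$2 - c) * ((x$1$1 - c) * v$1 + x$1$2 * v$2) - x$1$2 * (x$2$1 * v$1 + (x$2$2 - c) * v$2)"
    unfolding D_def by (simp add: algebra_simps)
  hence d1: "D * v$1 = 0" using e1 e2 by simp
  have "D * v$2 = (x$1$1 - c) * (x$2$1 * v$1 + (x$2$2 - c) * v$2) - x$2$1 * ((x$1$1 - c) * v$1 + x$1$2 * v$2)"
    unfolding D_def by (simp add: algebra_simps)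
  hence d2: "D * v$2 = 0" using e1 e2 by simp
  have "D = 0" using d1 d2 vec_nz[OF assms(2)] by auto
  thus ?thesis unfolding D_def by (simp add: det_2 algebra_simps)
qed

lemma uni_vec: assumes "det (y::cmat) = 1" "y *v v = e *s v" "e * e = 1" "v$k \<noteq> 0"
  shows "y *v w - e *s w = (((y *v w - e *s w)$k) / v$k) *s v"
proof -
  have v0: "v \<noteq> 0" using assms(4) by auto
  have ee: "e * e - (y$1$1 + y$2$2) * e + 1 = 0" using eig_eq[OF assms(2) v0] assms(1) by simp
  have tr: "y$1$1 + y$2$2 = 2 * e"
  proof -
    have "e * (e * e - (y$1$1 + y$2$2) * e + 1) = 0" using ee by simp
    hence "e * (e * e) - (y$1$1 + y$2$2) * (e * e) + e = 0" by (simp add: algebra_simps)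
    thus ?thesis using assms(3) by (simp add: algebra_simps)
  qed
  have e1: "(y$1$1 - e) * v$1 + y$1$2 * v$2 = 0" using arg_cong[OF assms(2), of "\<lambda>u. u$1"]
    by (simp add: mv_2x2 algebra_simps)
  have e2: "y$2$1 * v$1 + (y$2$2 - e) * v$2 = 0" using arg_cong[OF assms(2), of "\<lambda>u. u$2"]
    by (simp add: mv_2x2 algebra_simps)
  define u1 where "u1 = (y$1$1 - e) * w$1 + y$1$2 * w$2"
  define u2 where "u2 = y$2$1 * w$1 + (y$2$2 - e) * w$2"
  have u: "(y *v w - e *s w)$1 = u1" "(y *v w - e *s w)$2 = u2"
    unfolding u1_def u2_def by (simp_all add: mv_2x2 algebra_simps)
  have "u1 * v$2 - u2 * v$1 = w$1 * ((y$1$1 - e) * v$2 - y$2$1 * v$1) + w$2 * (y$1$2 * v$2 - (y$2$2 - e) * v$1)"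
    unfolding u1_def u2_def by (simp add: algebra_simps)
  also have "(y$1$1 - e) * v$2 - y$2$1 * v$1 = (y$1$1 + y$2$2 - 2 * e) * v$2 - (y$2$1 * v$1 + (y$2$2 - e) * v$2)"
    by (simp add: algebra_simps)
  also have "y$1$2 * v$2 - (y$2$2 - e) * v$1 = ((y$1$1 - e) * v$1 + y$1$2 * v$2) - (y$1$1 + y$2$2 - 2 * e) * v$1"
    by (simp add: algebra_simps)
  finally have cross: "u1 * v$2 = u2 * v$1" using tr e1 e2 by simp
  have "k = 1 \<or> k = 2" by (rule exhaust_2)
  thus ?thesis
  proof
    assume 1: "k = 1"
    hence "v$1 \<noteq> 0" using assms(4) by simp
    thus ?thesis unfolding vec_eq_iff forall_2 using 1 u cross by (simp add: field_simps)
  next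
    assume 2: "k = 2"
    hence "v$2 \<noteq> 0" using assms(4) by simp
    thus ?thesis unfolding vec_eq_iff forall_2 using 2 u cross by (simp add: field_simps)
  qed
qed

lemma alg_int_0: "alg_int 0"
  unfolding alg_int_def by (rule exI[of _ "[:0,1:]"]) (simp add: poly_int_sum)

lemma alg_int_1: "alg_int 1"
  unfolding alg_int_def by (rule exI[of _ "[:-1,1:]"]) (simp add: poly_int_sum)

lemma mat1_SL2O: "mat 1 \<in> SL2 (ring_of_integers (imag_quad_field d))"
proof -
  have "\<forall>i j. (mat 1 :: cmat)$i$j \<in> ring_of_integers (imag_quad_field d)"
    unfolding ring_of_integers_def by (auto simp: mat_def F_0 F_1 alg_int_0 alg_int_1)
  thus ?thesis unfolding SL2_def by simp
qed

lemma O_BD: assumes "z \<in> ring_of_integers (imag_quad_field d)" shows "BD d z"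
  using assms alg_int_BD unfolding ring_of_integers_def by blast

lemma pigeon:
  assumes "finite C" "\<And>k. f k \<in> C"
  obtains i j where "i < (j::nat)" "f i = f j"
proof -
  have "\<not> inj_on f {0..card C}"
  proof
    assume inj: "inj_on f {0..card C}"
    have "card (f ` {0..card C}) = Suc (card C)" using card_image[OF inj] by simp
    moreover have "card (f ` {0..card C}) \<le> card C" by (rule card_mono[OF assms(1)]) (use assms(2) in auto)
    ultimately show False by simp
  qed
  then obtain i j where ij: "i \<noteq> j" "f i = f j" unfolding inj_on_def by blast
  show ?thesis
  proof (cases "i < j")
    case True thus ?thesis using ij that by blast
  next
    case False hence "j < i" using ij by simp
    thus ?thesis using ij that by metis
  qed
qed

lemma key_pm:
  assumes sq: "squarefree d" and d1: "d \<noteq> 1" and d3: "d \<noteq> 3"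
    and AG: "arithmetic_subgroup (imag_quad_field d) \<Gamma>"
    and v0: "v \<noteq> 0" and x: "x \<in> \<Gamma>" and xv: "x *v v = c *s v" and cF: "c \<in> imag_quad_field d"
  shows "c = 1 \<or> c = -1"
proof -
  let ?F = "imag_quad_field d"
  let ?O = "ring_of_integers ?F"
  define H where "H = \<Gamma> \<inter> SL2 ?O"
  define C where "C = {(\<lambda>h. g ** h) ` H | g. g \<in> \<Gamma>}"
  have sub: "is_subgroup \<Gamma> (SL2 ?F)" using AG unfolding arithmetic_subgroup_def by blast
  have finC: "finite C" using AG unfolding arithmetic_subgroup_def commensurable_def finite_index_def C_def H_def by blast
  have d0: "d > 0" using sq by (cases "d = 0") auto
  have xSL: "x \<in> SL2 ?F" using sub x unfolding is_subgroup_def by blast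
  have detx: "det x = 1" using xSL unfolding SL2_def by blast
  define f where "f k = (\<lambda>h. mpow x k ** h) ` H" for k
  have fC: "f k \<in> C" for k unfolding f_def C_def
    by (rule CollectI, rule exI[of _ "mpow x k"]) (simp add: mpow_Gamma[OF sub x])
  obtain i j where ij: "i < j" "f i = f j" by (rule pigeon[OF finC fC])
  define n where "n = j - i"
  have n0: "n > 0" and jn: "j = i + n" using ij(1) n_def by auto
  have one_H: "mat 1 \<in> H" unfolding H_def using sub mat1_SL2O unfolding is_subgroup_def by blast
  have "mpow x i \<in> f i" unfolding f_def using one_H by (metis image_eqI matrix_mul_rid)
  hence "mpow x i \<in> f j" using ij(2) by simp
  then obtain h where hH: "h \<in> H" and hi: "mpow x i = mpow x j ** h" unfolding f_def by blast
  have hO: "h \<in> SL2 ?O" using hH H_def by blast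
  have deth: "det h = 1" using hO unfolding SL2_def by blast
  have "mat 1 = adj2 (mpow x i) ** mpow x i" using adj2_left[OF mpow_det[OF detx]] by simp
  also have "\<dots> = adj2 (mpow x i) ** (mpow x i ** (mpow x n ** h))"
    using hi jn by (simp add: mpow_add matrix_mul_assoc)
  also have "\<dots> = mpow x n ** h"
    by (simp add: matrix_mul_assoc adj2_left[OF mpow_det[OF detx]])
  finally have nh: "mpow x n ** h = mat 1" by simp
  have "mpow x n = mpow x n ** (h ** adj2 h)" using adj2_right[OF deth] by simp
  also have "\<dots> = adj2 h" using nh by (simp add: matrix_mul_assoc)
  finally have xn: "mpow x n = adj2 h" .
  define t where "t = mpow x n $1$1 + mpow x n $2$2"
  have t: "t = h$2$2 + h$1$1" unfolding t_def xn adj2_comp ..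
  have hent: "h$i'$j' \<in> ?O" for i' j' using hO unfolding SL2_def by blast
  have Bt: "BD d t" unfolding t by (rule BD_add[OF O_BD[OF hent] O_BD[OF hent]])
  have eig: "mpow x n *v v = c^n *s v" by (rule mpow_eig[OF xv])
  have "c^n * c^n - t * c^n + det (mpow x n) = 0" unfolding t_def by (rule eig_eq[OF eig v0])
  hence eq: "c^n * c^n - t * c^n + 1 = 0" using mpow_det[OF detx] by simp
  have cnF: "c^n \<in> ?F" by (rule F_power[OF cF])
  have u1: "c^n * cnj (c^n) = 1" and Bcn: "BD d (c^n)" using unit_lemma[OF Bt cnF eq d0] by auto
  have Bc: "BD d c" by (rule BD_root[OF cF n0 Bcn])
  obtain r where r: "c * cnj c = of_rat r" "r \<ge> 0" using F_norm[OF cF] by blast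
  have "(c * cnj c)^n = 1" using u1 by (simp add: power_mult_distrib)
  hence "(of_rat (r^n) :: complex) = of_rat (1^n)" using r(1) by (simp add: of_rat_power)
  hence "r^n = 1^n" by (simp only: of_rat_eq_iff)
  hence "r = 1" using power_eq_iff_eq_base[OF n0 r(2), of 1] by simp
  hence cc: "c * cnj c = 1" using r(1) by simp
  show ?thesis by (rule pm_one[OF cF cc Bc sq d1 d3])
qed

lemma vsmult_add: "(a::complex) *s (x + y) = a *s x + a *s (y::complex^2)"
  by (simp add: vec_eq_iff algebra_simps)

lemma mat_comm:
  assumes dx: "det (x::cmat) = 1" and dy: "det (y::cmat) = 1"
    and xv: "x *v v = e *s v" and yv: "y *v v = f *s v" and ee: "e * e = 1" and ff: "f * f = 1"
    and vk: "v$k \<noteq> 0"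
  shows "x ** y = y ** x"
proof -
  have "(x ** y) *v w = (y ** x) *v w" for w
  proof -
    define l where "l = (x *v w - e *s w)$k / v$k"
    define m where "m = (y *v w - f *s w)$k / v$k"
    have "x *v w - e *s w = l *s v" unfolding l_def by (rule uni_vec[OF dx xv ee vk])
    hence xw: "x *v w = e *s w + l *s v" by (metis add.commute diff_eq_eq)
    have "y *v w - f *s w = m *s v" unfolding m_def by (rule uni_vec[OF dy yv ff vk])
    hence yw: "y *v w = f *s w + m *s v" by (metis add.commute diff_eq_eq)
    have "(x ** y) *v w = x *v (y *v w)" by (simp add: matrix_vector_mul_assoc)
    also have "\<dots> = f *s (x *v w) + m *s (x *v v)"
      unfolding yw by (simp add: matrix_vector_right_distrib vector_scalar_commute)
    also have "\<dots> = f *s (e *s w + l *s v) + m *s (e *s v)" unfolding xw xv ..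
    finally have A: "(x ** y) *v w = f *s (e *s w + l *s v) + m *s (e *s v)" .
    have "(y ** x) *v w = y *v (x *v w)" by (simp add: matrix_vector_mul_assoc)
    also have "\<dots> = e *s (y *v w) + l *s (y *v v)"
      unfolding xw by (simp add: matrix_vector_right_distrib vector_scalar_commute)
    also have "\<dots> = e *s (f *s w + m *s v) + l *s (f *s v)" unfolding yw yv ..
    finally have B: "(y ** x) *v w = e *s (f *s w + m *s v) + l *s (f *s v)" .
    show ?thesis unfolding A B by (simp add: vec_eq_iff algebra_simps)
  qed
  thus ?thesis by (simp add: matrix_eq)
qed

theorem lemma4p9:
  fixes d :: nat and \<Gamma> :: "(complex^2^2) set" and v :: "complex^2"
  assumes "squarefree d" and "d \<noteq> 1" and "d \<noteq> 3"
    and "arithmetic_subgroup (imag_quad_field d) \<Gamma>"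
    and "vec_in (imag_quad_field d) v" and "v \<noteq> 0"
    and "\<exists>u::'r::ring_1. 2 * u = 1 \<and> u * 2 = 1"
  shows "H1_iso (H1 (\<Gamma> \<inter> parabolic_pts (imag_quad_field d) v) :: (complex^2^2 \<Rightarrow> 'r) set)
                (H1 (\<Gamma> \<inter> unipotent_radical_pts (imag_quad_field d) v))"
proof -
  let ?F = "imag_quad_field d"
  define GP where "GP = \<Gamma> \<inter> parabolic_pts ?F v"
  define GU where "GU = \<Gamma> \<inter> unipotent_radical_pts ?F v"
  obtain u :: 'r where u: "2 * u = 1" "u * 2 = 1" using assms(7) by blast
  have sub: "is_subgroup \<Gamma> (SL2 ?F)" using assms(4) unfolding arithmetic_subgroup_def by blast
  have GSL: "z \<in> \<Gamma> \<Longrightarrow> z \<in> SL2 ?F" for z using sub unfolding is_subgroup_def by blast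
  have Gmul: "x \<in> \<Gamma> \<Longrightarrow> y \<in> \<Gamma> \<Longrightarrow> x ** y \<in> \<Gamma>" for x y using sub unfolding is_subgroup_def by blast
  have detG: "z \<in> \<Gamma> \<Longrightarrow> det z = 1" for z using GSL unfolding SL2_def by blast
  obtain k where vk: "v$k \<noteq> 0" using vec_nz[OF assms(6)] by blast
  have vkF: "v$k \<in> ?F" using assms(5) unfolding vec_in_def by blast
  have GU_GP: "GU \<subseteq> GP"
  proof
    fix z assume "z \<in> GU"
    hence z: "z \<in> \<Gamma>" "z \<in> SL2 ?F" "z *v v = v" unfolding GU_def unipotent_radical_pts_def by auto
    hence "z *v v = 1 *s v" by simp
    thus "z \<in> GP" unfolding GP_def parabolic_pts_def using z F_1 by blast
  qed
  have pm: "\<exists>e. z *v v = e *s v \<and> e * e = 1" if "z \<in> GP" for z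
  proof -
    from that obtain c where z: "z \<in> \<Gamma>" "c \<in> ?F" "z *v v = c *s v"
      unfolding GP_def parabolic_pts_def by blast
    have "c = 1 \<or> c = -1" by (rule key_pm[OF assms(1-4) assms(6) z(1) z(3) z(2)])
    hence "c * c = 1" by auto
    thus ?thesis using z(3) by blast
  qed
  have unip: "y \<in> GU" if y: "y \<in> \<Gamma>" "y *v v = v" for y
  proof -
    have ySL: "y \<in> SL2 ?F" using GSL y(1) .
    have yv1: "y *v v = 1 *s v" using y(2) by simp
    have "\<exists>c\<in>?F. y *v w - w = c *s v" if w: "vec_in ?F w" for w
    proof -
      have "y *v w - 1 *s w = ((y *v w - 1 *s w)$k / v$k) *s v"
        by (rule uni_vec[OF detG[OF y(1)] yv1 _ vk]) simp
      hence eq: "y *v w - w = ((y *v w - w)$k / v$k) *s v" by simp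
      have "(y *v w - w)$k = y$k$1 * w$1 + y$k$2 * w$2 - w$k" by (simp add: mv_2x2)
      moreover have "y$k$1 * w$1 + y$k$2 * w$2 - w$k \<in> ?F"
        using ySL w unfolding SL2_def vec_in_def by (auto intro!: F_diff F_add F_mult)
      ultimately have "(y *v w - w)$k / v$k \<in> ?F" using F_divide vkF by simp
      thus ?thesis using eq by blast
    qed
    thus ?thesis unfolding GU_def unipotent_radical_pts_def using y ySL by blast
  qed
  have sqGU: "z ** z \<in> GU" if z: "z \<in> GP" for z
  proof -
    obtain e where e: "z *v v = e *s v" "e * e = 1" using pm[OF z] by blast
    have zG: "z \<in> \<Gamma>" using z GP_def by blast
    have "(z ** z) *v v = z *v (e *s v)" using e(1) by (simp flip: matrix_vector_mul_assoc)
    also have "\<dots> = (e * e) *s v" using e(1) by (simp add: vector_scalar_commute vector_smult_assoc)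
    finally have "(z ** z) *v v = v" using e(2) by simp
    thus ?thesis using unip Gmul[OF zG zG] by blast
  qed
  have mulGP: "x ** y \<in> GP" if x: "x \<in> GP" and y: "y \<in> GP" for x y
  proof -
    obtain c where c: "x \<in> \<Gamma>" "c \<in> ?F" "x *v v = c *s v" using x unfolding GP_def parabolic_pts_def by blast
    obtain c' where c': "y \<in> \<Gamma>" "c' \<in> ?F" "y *v v = c' *s v" using y unfolding GP_def parabolic_pts_def by blast
    have "(x ** y) *v v = x *v (c' *s v)" using c'(3) by (simp flip: matrix_vector_mul_assoc)
    also have "\<dots> = (c' * c) *s v" using c(3) by (simp add: vector_scalar_commute vector_smult_assoc)
    finally have "(x ** y) *v v = (c' * c) *s v" .
    moreover have "c' * c \<in> ?F" using F_mult c(2) c'(2) by blast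
    moreover have "x ** y \<in> SL2 ?F" using SL2_mult GSL c(1) c'(1) by blast
    ultimately show ?thesis unfolding GP_def parabolic_pts_def using Gmul[OF c(1) c'(1)] by blast
  qed
  have comm: "x ** y = y ** x" if x: "x \<in> GP" and y: "y \<in> GP" for x y
  proof -
    obtain e where e: "x *v v = e *s v" "e * e = 1" using pm[OF x] by blast
    obtain f where f: "y *v v = f *s v" "f * f = 1" using pm[OF y] by blast
    have "det x = 1" "det y = 1" using x y detG unfolding GP_def by auto
    thus ?thesis using mat_comm e f vk by blast
  qed
  have sqmul: "(x ** y) ** (x ** y) = (x ** x) ** (y ** y)" if x: "x \<in> GP" and y: "y \<in> GP" for x y
  proof -
    have "(x ** y) ** (x ** y) = x ** ((y ** x) ** y)" by (simp add: matrix_mul_assoc)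
    also have "\<dots> = x ** ((x ** y) ** y)" using comm[OF x y] by simp
    also have "\<dots> = (x ** x) ** (y ** y)" by (simp add: matrix_mul_assoc)
    finally show ?thesis .
  qed
  have half: "u * (a + a) = a" for a :: 'r
  proof -
    have "u * (a + a) = (u * 2) * a" by (simp add: algebra_simps mult_2)
    thus ?thesis using u(2) by simp
  qed
  define \<phi> where "\<phi> = (\<lambda>(g :: cmat \<Rightarrow> 'r) z. if z \<in> GU then g z else 0)"
  have mulGU: "x ** y \<in> GU" if x: "x \<in> GU" and y: "y \<in> GU" for x y
  proof -
    have xy: "x \<in> \<Gamma>" "y \<in> \<Gamma>" "x *v v = v" "y *v v = v"
      using x y unfolding GU_def unipotent_radical_pts_def by auto
    have "(x ** y) *v v = v" using xy by (simp flip: matrix_vector_mul_assoc)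
    thus ?thesis using unip Gmul[OF xy(1,2)] by blast
  qed
  have maps: "\<phi> g \<in> H1 GU" if g: "g \<in> H1 GP" for g
    using g GU_GP mulGU unfolding H1_def \<phi>_def by (auto simp: subset_iff)
  have inj: "inj_on \<phi> (H1 GP)"
  proof (rule inj_onI)
    fix g1 g2 assume g1: "g1 \<in> H1 GP" and g2: "g2 \<in> H1 GP" and eq: "\<phi> g1 = \<phi> g2"
    show "g1 = g2"
    proof
      fix z
      show "g1 z = g2 z"
      proof (cases "z \<in> GP")
        case True
        have "g1 (z ** z) = g1 z + g1 z" using g1 True unfolding H1_def by blast
        moreover have "g2 (z ** z) = g2 z + g2 z" using g2 True unfolding H1_def by blast
        moreover have "g1 (z ** z) = g2 (z ** z)" using fun_cong[OF eq, of "z ** z"] sqGU[OF True]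
          unfolding \<phi>_def by simp
        ultimately have "g1 z + g1 z = g2 z + g2 z" by simp
        thus ?thesis using half by metis
      next
        case False thus ?thesis using g1 g2 unfolding H1_def by auto
      qed
    qed
  qed
  have surj: "H1 GU \<subseteq> \<phi> ` H1 GP"
  proof
    fix h :: "cmat \<Rightarrow> 'r" assume h: "h \<in> H1 GU"
    define g where "g = (\<lambda>z. if z \<in> GP then u * h (z ** z) else 0)"
    have hom: "h (a ** b) = h a + h b" if "a \<in> GU" "b \<in> GU" for a b using h that unfolding H1_def by blast
    have gH: "g \<in> H1 GP" unfolding H1_def
    proof (intro CollectI conjI ballI allI impI)
      fix x y assume x: "x \<in> GP" and y: "y \<in> GP"
      have "g (x ** y) = u * h ((x ** x) ** (y ** y))" unfolding g_def using mulGP[OF x y] sqmul[OF x y] by simp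
      also have "\<dots> = u * h (x ** x) + u * h (y ** y)" using hom[OF sqGU[OF x] sqGU[OF y]] by (simp add: distrib_left)
      finally show "g (x ** y) = g x + g y" unfolding g_def using x y by simp
    next
      fix x assume "x \<notin> GP" thus "g x = 0" unfolding g_def by simp
    qed
    have "\<phi> g = h"
    proof
      fix z
      show "\<phi> g z = h z"
      proof (cases "z \<in> GU")
        case True
        hence zP: "z \<in> GP" using GU_GP by blast
        have "\<phi> g z = u * h (z ** z)" unfolding \<phi>_def g_def using True zP by simp
        also have "\<dots> = u * (h z + h z)" using hom[OF True True] by simp
        also have "\<dots> = h z" by (rule half)
        finally show ?thesis .
      next
        case False thus ?thesis using h unfolding \<phi>_def H1_def by auto
      qed
    qed
    thus "h \<in> \<phi> ` H1 GP" using gH by blast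
  qed
  have bij: "bij_betw \<phi> (H1 GP) (H1 GU)"
    unfolding bij_betw_def using inj maps surj by blast
  have add: "\<forall>f\<in>H1 GP. \<forall>g\<in>H1 GP. \<phi> (\<lambda>x. f x + g x) = (\<lambda>x. \<phi> f x + \<phi> g x)"
    unfolding \<phi>_def by auto
  have smul: "\<forall>r. \<forall>f\<in>H1 GP. \<phi> (\<lambda>x. r * f x) = (\<lambda>x. r * \<phi> f x)"
    unfolding \<phi>_def by auto
  show ?thesis unfolding H1_iso_def GP_def[symmetric] GU_def[symmetric] using bij add smul by blast
qed

end
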